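(* Let $\mathcal{H}$ be a separable infinite-dimensional complex Hilbert space, let $T\in\mathscr{B}(\mathcal{H})$ have dense range, let $\varepsilon>0$ and let $x_0\in\mathcal{H}$ with $\|x_0\|>\varepsilon$. Then the map $t\mapsto\|y_{tx_0,\varepsilon}\|$ is non-decreasing on the interval $\left]\frac{\varepsilon}{\|x_0\|},+\infty\right[$.
   Context: For $T\in\mathscr{B}(\mathcal{H})$ with dense range, $x\neq 0$ and $0<\varepsilon<\|x\|$, the extremal vector $y_{x,\varepsilon}$ is the unique vector $y_0\in\mathcal{H}$ with $\|Ty_0-x\|\leqslant\varepsilon$ and $\|y_0\|=\inf\{\|y\|:\|Ty-x\|\leqslant\varepsilon\}$. *)

theory Defs
  imports "HOL-Analysis.Analysis"
begin

text \<open>A complex Hilbert space is modelled as a real Hilbert space (real inner product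
  space that is complete) together with a complex scalar multiplication sc that extends
  the real one, satisfies the module axioms, and for which multiplication by i is
  isometric for the real inner product. The complex inner product is then
  inner x y + i * inner x (sc i y); the norm is the same.\<close>

definition complex_scaling :: "(complex \<Rightarrow> 'a::real_inner \<Rightarrow> 'a) \<Rightarrow> bool" where
  "complex_scaling sc \<longleftrightarrow>
     (\<forall>r x. sc (complex_of_real r) x = r *\<^sub>R x) \<and>
     (\<forall>a b x. sc (a + b) x = sc a x + sc b x) \<and>
     (\<forall>a x y. sc a (x + y) = sc a x + sc a y) \<and>
     (\<forall>a b x. sc (a * b) x = sc a (sc b x)) \<and>
     (\<forall>x y. inner (sc \<i> x) (sc \<i> y) = inner x y)"

definition bounded_clinear_op ::
  "(complex \<Rightarrow> 'a::real_normed_vector \<Rightarrow> 'a) \<Rightarrow> ('a \<Rightarrow> 'a) \<Rightarrow> bool" where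
  "bounded_clinear_op sc T \<longleftrightarrow> bounded_linear T \<and> (\<forall>c x. T (sc c x) = sc c (T x))"

text \<open>Infinite-dimensional: not spanned by any finite set (real and complex
  finite-dimensionality coincide).\<close>
definition infinite_dimensional :: "'a::real_vector itself \<Rightarrow> bool" where
  "infinite_dimensional _ \<longleftrightarrow> \<not> (\<exists>S::'a set. finite S \<and> span S = UNIV)"

definition extremal_vector :: "('a::real_normed_vector \<Rightarrow> 'a) \<Rightarrow> 'a \<Rightarrow> real \<Rightarrow> 'a" where
  "extremal_vector T x \<epsilon> =
     (THE y0. norm (T y0 - x) \<le> \<epsilon> \<and>
              norm y0 = Inf {norm y | y. norm (T y - x) \<le> \<epsilon>})"

end

theory Submission
  imports Defs
begin

lemma parallelogram_aux:
  fixes a b :: "'a::real_inner"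
  shows "norm (a + b)^2 + norm (a - b)^2 = 2 * norm a ^2 + 2 * norm b ^2"
  by (simp add: power2_norm_eq_inner inner_add_left inner_add_right inner_diff_left inner_diff_right inner_commute)

lemma convex_diff_bound:
  fixes a b :: "'a::real_inner"
  assumes "convex S" "a \<in> S" "b \<in> S" "\<And>z. z \<in> S \<Longrightarrow> d \<le> norm z" "0 \<le> d"
  shows "norm (a - b)^2 \<le> 2 * (norm a ^2 - d^2) + 2 * (norm b^2 - d^2)"
proof -
  have m: "(1/2) *\<^sub>R a + (1/2) *\<^sub>R b \<in> S"
    by (rule convexD[OF assms(1,2,3)]) auto
  have "d \<le> norm ((1/2) *\<^sub>R a + (1/2) *\<^sub>R b)" using assms(4) m by blast
  also have "(1/2) *\<^sub>R a + (1/2) *\<^sub>R b = (1/2) *\<^sub>R (a + b)" by (simp add: scaleR_add_right)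
  finally have "2 * d \<le> norm (a + b)" by simp
  hence "(2*d)^2 \<le> norm (a + b)^2" using assms(5) by (intro power_mono) auto
  with parallelogram_aux[of a b] show ?thesis by (simp add: power_mult_distrib)
qed

lemma min_norm_exists:
  fixes S :: "'a::{real_inner,complete_space} set"
  assumes cl: "closed S" and cv: "convex S" and ne: "S \<noteq> {}"
  shows "\<exists>!y. y \<in> S \<and> norm y = Inf (norm ` S)"
proof -
  define d where "d = Inf (norm ` S)"
  have bdd: "bdd_below (norm ` S)" by (rule bdd_belowI[of _ 0]) auto
  have dle: "\<And>z. z \<in> S \<Longrightarrow> d \<le> norm z" unfolding d_def using bdd by (simp add: cInf_lower)
  have d0: "0 \<le> d" unfolding d_def using ne by (intro cInf_greatest) auto
  have "\<forall>n. \<exists>y. y \<in> S \<and> norm y < d + 1 / (real n + 1)"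
  proof
    fix n
    have "Inf (norm ` S) < d + 1 / (real n + 1)" unfolding d_def by (simp add: add_pos_pos)
    then obtain r where "r \<in> norm ` S" "r < d + 1 / (real n + 1)"
      using cInf_lessD[of "norm ` S"] ne by blast
    thus "\<exists>y. y \<in> S \<and> norm y < d + 1 / (real n + 1)" by auto
  qed
  then obtain y where yS: "\<And>n. y n \<in> S" and yl: "\<And>n. norm (y n) < d + 1 / (real n + 1)"
    by metis
  have lim0: "(\<lambda>n. 1 / (real n + 1)) \<longlonglongrightarrow> (0::real)"
  proof -
    have e: "(\<lambda>n. 1 / (real n + 1)) = (\<lambda>n. 1 / real (Suc n))" by (simp only: Suc_eq_plus1 of_nat_add of_nat_1)
    show ?thesis unfolding e by (rule LIMSEQ_Suc[OF lim_1_over_n])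
  qed
  have lim1: "(\<lambda>n. d + 1 / (real n + 1)) \<longlonglongrightarrow> d + 0"
    by (rule tendsto_add[OF tendsto_const lim0])
  have ny: "(\<lambda>n. norm (y n)) \<longlonglongrightarrow> d"
  proof (rule tendsto_sandwich[of "\<lambda>_. d" _ _ "\<lambda>n. d + 1 / (real n + 1)"])
    show "eventually (\<lambda>n. d \<le> norm (y n)) sequentially"
      by (intro always_eventually allI) (rule dle[OF yS])
    show "eventually (\<lambda>n. norm (y n) \<le> d + 1 / (real n + 1)) sequentially"
      by (intro always_eventually allI less_imp_le yl)
    show "(\<lambda>_. d) \<longlonglongrightarrow> d" by (rule tendsto_const)
    show "(\<lambda>n. d + 1 / (real n + 1)) \<longlonglongrightarrow> d" using lim1 by simp
  qed
  define f where "f n = norm (y n)^2 - d^2" for n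
  have f0: "f \<longlonglongrightarrow> 0" unfolding f_def using tendsto_diff[OF tendsto_power[OF ny, of 2] tendsto_const[of "d^2"]] by simp
  have cb: "\<And>m n. norm (y m - y n)^2 \<le> 2 * f m + 2 * f n"
    unfolding f_def by (rule convex_diff_bound[OF cv yS yS dle d0])
  have "Cauchy y"
  proof (rule metric_CauchyI)
    fix e :: real assume e: "e > 0"
    have "e^2/4 > 0" using e by simp
    from f0[THEN LIMSEQ_D, OF this] obtain N where N: "\<And>n. n \<ge> N \<Longrightarrow> norm (f n - 0) < e^2/4" by blast
    show "\<exists>M. \<forall>m\<ge>M. \<forall>n\<ge>M. dist (y m) (y n) < e"
    proof (intro exI allI impI)
      fix m n assume "m \<ge> N" "n \<ge> N"
      hence "f m < e^2/4" "f n < e^2/4" using N by force+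
      hence "norm (y m - y n)^2 < e^2" using cb[of m n] by linarith
      hence "norm (y m - y n) < e" using e by (simp add: power_less_imp_less_base)
      thus "dist (y m) (y n) < e" by (simp add: dist_norm)
    qed
  qed
  then obtain l where yl2: "y \<longlonglongrightarrow> l" using Cauchy_convergent_iff convergent_def by blast
  have lS: "l \<in> S" using cl yl2 yS closed_sequentially by blast
  have nl: "norm l = d" using tendsto_unique[OF _ tendsto_norm[OF yl2] ny] by simp
  show ?thesis
  proof (rule ex_ex1I)
    show "\<exists>y. y \<in> S \<and> norm y = Inf (norm ` S)" using lS nl d_def by blast
  next
    fix a b assume a: "a \<in> S \<and> norm a = Inf (norm ` S)" and b: "b \<in> S \<and> norm b = Inf (norm ` S)"
    have "norm (a - b)^2 \<le> 0" using convex_diff_bound[OF cv _ _ dle d0, of a b] a b d_def by simp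
    thus "a = b" by simp
  qed
qed

lemma norm_extremal:
  fixes T :: "'a::{real_inner,complete_space} \<Rightarrow> 'a"
  assumes bl: "bounded_linear T" and dense: "closure (range T) = UNIV" and e: "\<epsilon> > 0"
  shows "norm (extremal_vector T x \<epsilon>) = Inf {norm y | y. norm (T y - x) \<le> \<epsilon>}"
proof -
  define S where "S = {y. norm (T y - x) \<le> \<epsilon>}"
  have eqS: "{norm y | y. norm (T y - x) \<le> \<epsilon>} = norm ` S" unfolding S_def by auto
  have cont: "continuous_on UNIV (\<lambda>y. norm (T y - x))"
    by (intro continuous_intros linear_continuous_on bl)
  have cl: "closed S" unfolding S_def
    using closed_Collect_le[OF cont continuous_on_const] by simp
  interpret L: bounded_linear T by (rule bl)
  have cv: "convex S" unfolding S_def convex_def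
  proof (intro allI impI ballI, clarsimp)
    fix a b :: 'a and u v :: real
    assume a: "norm (T a - x) \<le> \<epsilon>" and b: "norm (T b - x) \<le> \<epsilon>" and u: "0 \<le> u" and v: "0 \<le> v" and uv: "u + v = 1"
    have t1: "T (u *\<^sub>R a + v *\<^sub>R b) = u *\<^sub>R T a + v *\<^sub>R T b" by (simp only: L.add L.scale)
    have t2: "x = u *\<^sub>R x + v *\<^sub>R x" using uv by (metis scaleR_add_left scaleR_one)
    have "T (u *\<^sub>R a + v *\<^sub>R b) - x = u *\<^sub>R T a + v *\<^sub>R T b - (u *\<^sub>R x + v *\<^sub>R x)"
      using t1 t2 by simp
    also have "\<dots> = u *\<^sub>R (T a - x) + v *\<^sub>R (T b - x)" by (simp add: scaleR_diff_right)
    finally have "T (u *\<^sub>R a + v *\<^sub>R b) - x = u *\<^sub>R (T a - x) + v *\<^sub>R (T b - x)" .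
    hence "norm (T (u *\<^sub>R a + v *\<^sub>R b) - x) \<le> u * norm (T a - x) + v * norm (T b - x)"
      using u v norm_triangle_ineq[of "u *\<^sub>R (T a - x)" "v *\<^sub>R (T b - x)"] by simp
    also have "\<dots> \<le> u * \<epsilon> + v * \<epsilon>" using a b u v by (intro add_mono mult_left_mono) auto
    also have "\<dots> = \<epsilon>" using uv by (simp flip: distrib_right)
    finally show "norm (T (u *\<^sub>R a + v *\<^sub>R b) - x) \<le> \<epsilon>" .
  qed
  have "x \<in> closure (range T)" using dense by simp
  then obtain z where "z \<in> range T" "dist z x < \<epsilon>" using e closure_approachable by metis
  then obtain y where "dist (T y) x < \<epsilon>" by auto
  hence ne: "S \<noteq> {}" unfolding S_def by (auto simp: dist_norm intro!: exI[of _ y])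
  have "\<exists>!y. y \<in> S \<and> norm y = Inf (norm ` S)" by (rule min_norm_exists[OF cl cv ne])
  hence th: "(THE y0. y0 \<in> S \<and> norm y0 = Inf (norm ` S)) \<in> S \<and> norm (THE y0. y0 \<in> S \<and> norm y0 = Inf (norm ` S)) = Inf (norm ` S)"
    by (rule theI')
  have ev: "extremal_vector T x \<epsilon> = (THE y0. y0 \<in> S \<and> norm y0 = Inf (norm ` S))"
    unfolding extremal_vector_def eqS by (simp add: S_def)
  hence "norm (extremal_vector T x \<epsilon>) = Inf (norm ` S)" using th by simp
  thus ?thesis using eqS by simp
qed

theorem mainTheorem9:
  fixes sc :: "complex \<Rightarrow> 'a::{real_inner, complete_space} \<Rightarrow> 'a"
    and T :: "'a \<Rightarrow> 'a" and \<epsilon> :: real and x0 :: 'a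
  assumes "complex_scaling sc"
    and "separable_space (euclidean :: 'a topology)"
    and "infinite_dimensional TYPE('a)"
    and "bounded_clinear_op sc T"
    and "closure (range T) = UNIV"
    and "\<epsilon> > 0"
    and "norm x0 > \<epsilon>"
  shows "mono_on {\<epsilon> / norm x0 <..} (\<lambda>t. norm (extremal_vector T (t *\<^sub>R x0) \<epsilon>))"
proof (rule mono_onI)
  have bl: "bounded_linear T" using assms(4) unfolding bounded_clinear_op_def by simp
  interpret L: bounded_linear T by (rule bl)
  fix s t assume s: "s \<in> {\<epsilon> / norm x0 <..}" and t: "t \<in> {\<epsilon> / norm x0 <..}" and st: "s \<le> t"
  have "\<epsilon> / norm x0 > 0" using assms(6,7) by (intro divide_pos_pos) auto
  hence s0: "s > 0" and t0: "t > 0" using s t by auto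
  let ?A = "\<lambda>x. {norm y | y. norm (T y - x) \<le> \<epsilon>}"
  have ne: "?A (t *\<^sub>R x0) \<noteq> {}"
  proof -
    have "t *\<^sub>R x0 \<in> closure (range T)" using assms(5) by simp
    then obtain z where "z \<in> range T" "dist z (t *\<^sub>R x0) < \<epsilon>" using assms(6) closure_approachable by metis
    thus ?thesis by (auto simp: dist_norm intro: less_imp_le)
  qed
  have "Inf (?A (s *\<^sub>R x0)) \<le> Inf (?A (t *\<^sub>R x0))"
  proof (rule cInf_greatest[OF ne])
    fix r assume "r \<in> ?A (t *\<^sub>R x0)"
    then obtain y where y: "norm (T y - t *\<^sub>R x0) \<le> \<epsilon>" and r: "r = norm y" by auto
    have "T ((s/t) *\<^sub>R y) - s *\<^sub>R x0 = (s/t) *\<^sub>R (T y - t *\<^sub>R x0)"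
      using t0 by (simp add: L.scale scaleR_diff_right)
    hence "norm (T ((s/t) *\<^sub>R y) - s *\<^sub>R x0) = (s/t) * norm (T y - t *\<^sub>R x0)"
      using s0 t0 by simp
    also have "\<dots> \<le> 1 * \<epsilon>" using s0 t0 st y by (intro mult_mono) auto
    finally have fe: "norm (T ((s/t) *\<^sub>R y) - s *\<^sub>R x0) \<le> \<epsilon>" by simp
    have "Inf (?A (s *\<^sub>R x0)) \<le> norm ((s/t) *\<^sub>R y)"
    proof (rule cInf_lower)
      show "norm ((s/t) *\<^sub>R y) \<in> ?A (s *\<^sub>R x0)" using fe by blast
      show "bdd_below (?A (s *\<^sub>R x0))" by (rule bdd_belowI[of _ 0]) auto
    qed
    also have "\<dots> = (s/t) * norm y" using s0 t0 by simp
    also have "\<dots> \<le> 1 * norm y" using s0 t0 st by (intro mult_right_mono) auto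
    finally show "Inf (?A (s *\<^sub>R x0)) \<le> r" using r by simp
  qed
  moreover have "norm (extremal_vector T (s *\<^sub>R x0) \<epsilon>) = Inf (?A (s *\<^sub>R x0))"
    by (rule norm_extremal[OF bl assms(5,6)])
  moreover have "norm (extremal_vector T (t *\<^sub>R x0) \<epsilon>) = Inf (?A (t *\<^sub>R x0))"
    by (rule norm_extremal[OF bl assms(5,6)])
  ultimately show "norm (extremal_vector T (s *\<^sub>R x0) \<epsilon>) \<le> norm (extremal_vector T (t *\<^sub>R x0) \<epsilon>)"
    by linarith
qed

end
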